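(* In the setting described in the context, for $n\ge0$ let $\tilde\mu'_{m,n}=\max\{x\in[\min P,d]: f^{m+2n}(x)=d\}$, and for $k\ge1$ let $\tilde\mu_{m,n,k}=\min\{x\in[\tilde\mu'_{m,n},\tilde\mu'_{m,n+1}]: f^{m+2n+2k}(x)=d\}$ (these sets are nonempty). Then for each $n\ge1$ and $k\ge1$, every periodic point of $f$ in $[\tilde\mu'_{m,n},\tilde\mu_{m,n,k}]$ whose least period is odd has least period $\ge m+2n+2k+2$.
   Context: Let $I$ be a compact interval and $f:I\to I$ continuous; $f^1=f$, $f^n=f\circ f^{n-1}$. A point $x_0$ is a periodic point of least period $k$ (a period-$k$ point) if $f^k(x_0)=x_0$ and $f^i(x_0)\ne x_0$ for $0<i<k$. Let $m\ge3$ be odd and let $P$ be a periodic orbit of $f$ of least period $m$. Put $e=f^{m-1}(\min P)$. Let $v\in[\min P,e)$ be a point with $f(v)=e$, and let $z\in(v,e)$ be a fixed point of $f$ (such points exist). Define $z_0=\min\{x\in[v,z]: f^2(x)=x\}$ and $d=\max\{x\in[\min P,v]: f^2(x)=z_0\}$ (both sets are nonempty). *)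

theory Defs
  imports "HOL-Analysis.Analysis"
begin

definition least_period_point :: "(real \<Rightarrow> real) \<Rightarrow> nat \<Rightarrow> real \<Rightarrow> bool" where
  "least_period_point f k x \<longleftrightarrow>
     0 < k \<and> (f ^^ k) x = x \<and> (\<forall>i. 0 < i \<and> i < k \<longrightarrow> (f ^^ i) x \<noteq> x)"

end

theory Submission
  imports Defs
begin


lemma greatest_closed:
  fixes Q :: "real \<Rightarrow> bool"
  assumes "closed {x. Q x}" "Q x0" "bdd_above {x. Q x}"
  shows "Q (GREATEST x. Q x) \<and> (\<forall>u. Q u \<longrightarrow> u \<le> (GREATEST x. Q x))"
proof -
  have s: "Sup {x. Q x} \<in> {x. Q x}"
    by (rule closed_contains_Sup) (use assms in auto)
  have up: "\<forall>u. Q u \<longrightarrow> u \<le> Sup {x. Q x}" using assms(3) by (auto intro: cSup_upper)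
  have "(GREATEST x. Q x) = Sup {x. Q x}"
    by (rule Greatest_equality) (use s up in auto)
  then show ?thesis using s up by auto
qed

lemma least_closed:
  fixes Q :: "real \<Rightarrow> bool"
  assumes "closed {x. Q x}" "Q x0" "bdd_below {x. Q x}"
  shows "Q (LEAST x. Q x) \<and> (\<forall>u. Q u \<longrightarrow> (LEAST x. Q x) \<le> u)"
proof -
  have s: "Inf {x. Q x} \<in> {x. Q x}"
    by (rule closed_contains_Inf) (use assms in auto)
  have up: "\<forall>u. Q u \<longrightarrow> Inf {x. Q x} \<le> u" using assms(3) by (auto intro: cInf_lower)
  have "(LEAST x. Q x) = Inf {x. Q x}"
    by (rule Least_equality) (use s up in auto)
  then show ?thesis using s up by auto
qed

lemma closed_pre:
  fixes h :: "real \<Rightarrow> real"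
  assumes "continuous_on {c..e} h"
  shows "closed {x. x \<in> {c..e} \<and> h x = y}"
  using continuous_closed_preimage_constant[OF assms closed_atLeastAtMost, of y] by simp

lemma ivt_between:
  fixes h :: "real \<Rightarrow> real"
  assumes "continuous_on {c..e} h" "c \<le> e"
    "min (h c) (h e) \<le> y" "y \<le> max (h c) (h e)"
  shows "\<exists>x\<in>{c..e}. h x = y"
proof (cases "h c \<le> h e")
  case True
  then show ?thesis using IVT'[of h c y e] assms by auto
next
  case False
  then show ?thesis using IVT2'[of h e y c] assms by auto
qed

lemma funpow_comm: "(f ^^ i) ((f ^^ j) x) = (f ^^ j) ((f ^^ i) x)"
  by (metis add.commute comp_apply funpow_add)

lemma funpow_addx: "(f ^^ (i + j)) x = (f ^^ i) ((f ^^ j) x)"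
  by (simp add: funpow_add)

lemma funpow_mod:
  assumes "(f ^^ m) p = p"
  shows "(f ^^ n) p = (f ^^ (n mod m)) p"
proof -
  have q: "(f ^^ (m * q)) p = p" for q
  proof (induction q)
    case 0 then show ?case by simp
  next
    case (Suc q)
    have "(f ^^ (m * Suc q)) p = (f ^^ m) ((f ^^ (m * q)) p)"
      by (simp add: funpow_add)
    then show ?case using Suc assms by simp
  qed
  have "(f ^^ n) p = (f ^^ (n mod m + m * (n div m))) p" by (metis mod_mult_div_eq)
  also have "\<dots> = (f ^^ (n mod m)) ((f ^^ (m * (n div m))) p)" by (simp only: funpow_add comp_apply)
  finally show ?thesis using q by simp
qed

lemma funpow_cont:
  fixes f :: "real \<Rightarrow> real"
  assumes "continuous_on {a..b} f" "f ` {a..b} \<subseteq> {a..b}"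
  shows "continuous_on {a..b} (f ^^ n) \<and> (f ^^ n) ` {a..b} \<subseteq> {a..b}"
proof (induction n)
  case 0 then show ?case by (simp add: continuous_on_id)
next
  case (Suc n)
  have e: "f ^^ Suc n = f \<circ> (f ^^ n)" by simp
  have "continuous_on {a..b} (f \<circ> (f ^^ n))"
    by (rule continuous_on_compose) (use Suc assms in \<open>auto intro: continuous_on_subset\<close>)
  moreover have "(f \<circ> (f ^^ n)) ` {a..b} \<subseteq> {a..b}" using Suc assms by auto
  ultimately show ?case using e by metis
qed


lemma ivt_seg:
  fixes h :: "real \<Rightarrow> real"
  assumes "continuous_on {min c e..max c e} h"
    "min (h c) (h e) \<le> y" "y \<le> max (h c) (h e)"
  shows "\<exists>x\<in>{min c e..max c e}. h x = y"
proof (cases "c \<le> e")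
  case True
  then show ?thesis using ivt_between[of c e h y] assms by auto
next
  case False
  then show ?thesis using ivt_between[of e c h y] assms by (auto simp: min.commute max.commute)
qed

lemma funpow_mult_fix:
  assumes "(f ^^ q) x = x"
  shows "(f ^^ (t * q)) x = x"
proof (induction t)
  case 0 then show ?case by simp
next
  case (Suc t)
  have "(f ^^ (Suc t * q)) x = (f ^^ q) ((f ^^ (t * q)) x)" by (simp add: funpow_add)
  then show ?case using Suc assms by simp
qed




theorem lemma11:
  fixes f :: "real \<Rightarrow> real" and a b :: real and m :: nat and p :: real
    and P :: "real set" and e v z z0 d :: real
    and mu' :: "nat \<Rightarrow> real" and mu :: "nat \<Rightarrow> nat \<Rightarrow> real"
  assumes ab: "a \<le> b"
    and cont: "continuous_on {a..b} f"
    and maps: "f ` {a..b} \<subseteq> {a..b}"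
    and m_odd: "odd m" and m_ge: "m \<ge> 3"
    and p_in: "p \<in> {a..b}"
    and p_per: "least_period_point f m p"
    and P_def: "P = {(f ^^ i) p | i. i < m}"
    and e_def: "e = (f ^^ (m - 1)) (Min P)"
    and v: "v \<in> {Min P..<e}" "f v = e"
    and z: "z \<in> {v<..<e}" "f z = z"
    and z0_def: "z0 = (LEAST x. x \<in> {v..z} \<and> f (f x) = x)"
    and d_def: "d = (GREATEST x. x \<in> {Min P..v} \<and> f (f x) = z0)"
    and mu'_def: "\<And>n. mu' n = (GREATEST x. x \<in> {Min P..d} \<and> (f ^^ (m + 2*n)) x = d)"
    and mu_def: "\<And>n k. mu n k =
        (LEAST x. x \<in> {mu' n..mu' (n+1)} \<and> (f ^^ (m + 2*n + 2*k)) x = d)"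
  shows "\<forall>n k x q. n \<ge> 1 \<and> k \<ge> 1 \<and> x \<in> {mu' n..mu n k} \<and>
           least_period_point f q x \<and> odd q \<longrightarrow> q \<ge> m + 2*n + 2*k + 2"
proof -
  define al where "al = Min P"
  have FC: "\<And>n. continuous_on {a..b} (f ^^ n)" using funpow_cont[OF cont maps] by blast
  have FM: "\<And>n x. x \<in> {a..b} \<Longrightarrow> (f ^^ n) x \<in> {a..b}" using funpow_cont[OF cont maps] by blast
  have FCs: "\<And>n c c'. a \<le> c \<Longrightarrow> c' \<le> b \<Longrightarrow> continuous_on {c..c'} (f ^^ n)"
    using FC continuous_on_subset by (metis atLeastatMost_subset_iff order_refl)
  have F2: "f ^^ 2 = (\<lambda>x. f (f x))" by (rule ext) (simp add: numeral_2_eq_2)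
  have F1: "f ^^ 1 = f" by simp
  have pp: "(f ^^ m) p = p" and m0: "0 < m" and pl: "\<And>i. 0<i \<Longrightarrow> i<m \<Longrightarrow> (f^^i) p \<noteq> p"
    using p_per unfolding least_period_point_def by auto
  have Pim: "P = (\<lambda>i. (f ^^ i) p) ` {..<m}" unfolding P_def by auto
  have Pfin: "finite P" and Pne: "P \<noteq> {}" using Pim m0 by auto
  have Pin: "\<And>j i. (f ^^ j) ((f ^^ i) p) \<in> P"
  proof -
    fix j i
    have "(f ^^ j) ((f ^^ i) p) = (f ^^ (j+i)) p" by (simp add: funpow_addx)
    also have "\<dots> = (f ^^ ((j+i) mod m)) p" by (rule funpow_mod[OF pp])
    finally show "(f ^^ j) ((f ^^ i) p) \<in> P" unfolding Pim using m0 by auto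
  qed
  have Pab: "P \<subseteq> {a..b}" unfolding Pim using FM p_in by auto
  have alP: "al \<in> P" unfolding al_def using Pfin Pne by simp
  have alle: "\<And>x. x \<in> P \<Longrightarrow> al \<le> x" unfolding al_def using Pfin by simp
  obtain i0 where i0: "i0 < m" "al = (f ^^ i0) p" using alP unfolding Pim by auto
  have PinA: "\<And>j. (f ^^ j) al \<in> P" using Pin i0 by simp
  have alper: "(f ^^ m) al = al" using i0 pp by (simp add: funpow_comm[where f=f and i=m and j=i0])
  have eal: "e = (f ^^ (m - 1)) al" using e_def al_def by simp
  have eP: "e \<in> P" using eal PinA by simp
  have fe: "f e = al"
  proof -
    have "f e = (f ^^ (Suc (m - 1))) al" using eal by simp
    then show ?thesis using m0 alper by simp
  qed
  have vge: "al \<le> v" "v < e" using v al_def by auto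
  have alab: "al \<in> {a..b}" and eab: "e \<in> {a..b}" using alP eP Pab by auto
  have vab: "v \<in> {a..b}" using vge alab eab by auto
  have zab: "z \<in> {a..b}" using z(1) vab eab by auto
  have ffv: "f (f v) = al" using v(2) fe by simp
  have alv: "al < v"
  proof (rule ccontr)
    assume "\<not> al < v"
    then have "v = al" using vge by simp
    then have ffa: "f (f al) = al" using ffv by simp
    have r: "(f ^^ (m - i0)) al = p" using i0 pp
      by (metis funpow_addx le_add_diff_inverse2 less_imp_le)
    have "(f ^^ 2) p = (f ^^ 2) ((f ^^ (m - i0)) al)" using r by simp
    also have "\<dots> = (f ^^ (m - i0)) ((f ^^ 2) al)" by (rule funpow_comm)
    also have "\<dots> = p" using ffa r F2 by simp
    finally show False using pl[of 2] m_ge by simp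
  qed
  have FFC: "\<And>c c'. a \<le> c \<Longrightarrow> c' \<le> b \<Longrightarrow> continuous_on {c..c'} (\<lambda>x. f (f x))"
    using FCs[of _ _ 2] F2 by simp
  have fC: "\<And>c c'. a \<le> c \<Longrightarrow> c' \<le> b \<Longrightarrow> continuous_on {c..c'} f"
    using FCs[of _ _ 1] by simp
  have z0P: "z0 \<in> {v..z} \<and> f (f z0) = z0 \<and> (\<forall>u. u \<in> {v..z} \<and> f (f u) = u \<longrightarrow> z0 \<le> u)"
  proof -
    have cl: "closed {x. x \<in> {v..z} \<and> f (f x) = x}"
    proof -
      have "continuous_on {v..z} (\<lambda>x. f (f x) - x)"
        using FFC[of v z] vab zab by (intro continuous_intros) auto
      from closed_pre[OF this, of 0] show ?thesis by simp
    qed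
    have "z \<in> {v..z} \<and> f (f z) = z" using z by auto
    moreover have "bdd_below {x. x \<in> {v..z} \<and> f (f x) = x}" by (rule bdd_belowI[of _ v]) auto
    ultimately have "?thesis" using least_closed[OF cl] unfolding z0_def by blast
    then show ?thesis .
  qed
  have z0in: "z0 \<in> {v..z}" and z0fix: "f (f z0) = z0"
    and z0min: "\<And>u. u \<in> {v..z} \<Longrightarrow> f (f u) = u \<Longrightarrow> z0 \<le> u"
    using z0P by blast+
  have z0ab: "z0 \<in> {a..b}" using z0in vab zab by auto
  have vz0: "v < z0"
  proof -
    have "z0 \<noteq> v" using z0fix ffv alv by auto
    then show ?thesis using z0in by auto
  qed
  have z0e: "z0 < e" using z0in z(1) by auto
  have neg: "\<And>u. u \<in> {v..<z0} \<Longrightarrow> f (f u) < u"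
  proof (rule ccontr)
    fix u assume u: "u \<in> {v..<z0}" and n: "\<not> f (f u) < u"
    have uab: "u \<in> {a..b}" using u vab z0ab by auto
    have "continuous_on {v..u} (\<lambda>x. f (f x) - x)"
      using FFC[of v u] vab uab by (intro continuous_intros) auto
    from ivt_between[OF this, of 0] obtain t where t: "t \<in> {v..u}" "f (f t) - t = 0"
      using u n ffv alv by auto
    then have "z0 \<le> t" using z0min[of t] u z0in by auto
    then show False using t u by auto
  qed
  define w where "w = f z0"
  have fw: "f w = z0" using z0fix w_def by simp
  have wz0: "z0 \<le> w"
  proof (rule ccontr)
    assume "\<not> z0 \<le> w"
    then have wl: "w < z0" by simp
    show False
    proof (cases "v \<le> w")
      case True
      then have "w \<in> {v..z}" "f (f w) = w" using wl z0in fw w_def by auto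
      then show False using z0min wl by force
    next
      case False
      from ivt_between[OF fC[of v z0], of v] obtain t where t: "t \<in> {v..z0}" "f t = v"
        using False vab z0ab vz0 v(2) vge w_def by auto
      have "t \<noteq> z0" using t False w_def by auto
      then have "f (f t) < t" using neg t by auto
      then show False using t v(2) z0e by auto
    qed
  qed
  have dex: "\<exists>u\<in>{al..v}. z0 \<le> f (f u)"
  proof (rule ccontr)
    assume H: "\<not> (\<exists>u\<in>{al..v}. z0 \<le> f (f u))"
    have "\<forall>j. (f ^^ (2*j)) al \<in> P \<and> (f ^^ (2*j)) al < z0"
    proof
      fix j show "(f ^^ (2*j)) al \<in> P \<and> (f ^^ (2*j)) al < z0"
      proof (induction j)
        case 0 then show ?case using alP alv vz0 by simp
      next
        case (Suc j)
        define u where "u = (f ^^ (2*j)) al"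
        have eq: "(f ^^ (2 * Suc j)) al = f (f u)" unfolding u_def by simp
        have "al \<le> u" using Suc alle u_def by auto
        have "f (f u) < z0"
        proof (cases "u \<le> v")
          case True then have "u \<in> {al..v}" using \<open>al \<le> u\<close> by simp
          then show ?thesis using H by (meson not_le)
        next
          case False then show ?thesis using neg[of u] Suc u_def by auto
        qed
        moreover have "(f ^^ (2 * Suc j)) al \<in> P" by (rule PinA)
        ultimately show ?case using eq by simp
      qed
    qed
    then have "(f ^^ (2 * ((m - 1) div 2))) al < z0" by blast
    moreover have "2 * ((m - 1) div 2) = m - 1" using m_odd by presburger
    ultimately have "e < z0" using eal by simp
    then show False using z0e by simp
  qed
  have dP: "d \<in> {al..v} \<and> f (f d) = z0"
  proof -
    obtain u where u: "u \<in> {al..v}" "z0 \<le> f (f u)" using dex by auto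
    from ivt_between[OF FFC[of u v], of z0] obtain t where t: "t \<in> {u..v}" "f (f t) = z0"
      using u alab vab ffv alv vz0 by auto
    have cl: "closed {x. x \<in> {al..v} \<and> f (f x) = z0}"
      using closed_pre[OF FFC[of al v], of z0] alab vab by simp
    have "t \<in> {al..v} \<and> f (f t) = z0" using t u by auto
    moreover have "bdd_above {x. x \<in> {al..v} \<and> f (f x) = z0}" by (rule bdd_aboveI[of _ v]) auto
    ultimately show ?thesis using greatest_closed[OF cl] unfolding d_def al_def[symmetric] by blast
  qed
  have dab: "d \<in> {a..b}" using dP alab vab by auto
  have dz0: "d < z0" using dP vz0 by auto
  have zpe: "\<And>j. (f ^^ (2*j)) z0 = z0"
  proof -
    fix j show "(f ^^ (2*j)) z0 = z0" by (induction j) (use z0fix in auto)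
  qed
  have zpo: "\<And>j. (f ^^ (2*j+1)) z0 = w" using zpe w_def by simp
  have dpe: "\<And>j. (f ^^ (2*j+2)) d = z0"
  proof -
    fix j
    have "(f ^^ (2*j+2)) d = (f ^^ (2*j)) ((f ^^ 2) d)" by (rule funpow_addx)
    then show "(f ^^ (2*j+2)) d = z0" using zpe dP F2 by simp
  qed
  have dpo: "\<And>j. (f ^^ (2*j+3)) d = w"
  proof -
    fix j
    have e3: "2*j+3 = (2*j+1) + (2::nat)" by simp
    have "(f ^^ (2*j+3)) d = (f ^^ (2*j+1)) ((f ^^ 2) d)"
      unfolding e3 by (rule funpow_addx)
    then show "(f ^^ (2*j+3)) d = w" using zpo dP F2 by simp
  qed
  have dodd: "\<And>T. odd T \<Longrightarrow> 3 \<le> T \<Longrightarrow> (f ^^ T) d = w"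
  proof -
    fix T :: nat assume "odd T" "3 \<le> T"
    then have "\<exists>j. T = 2 * j + 3" by presburger
    then obtain j where "T = 2 * j + 3" by blast
    then show "(f ^^ T) d = w" using dpo by simp
  qed
  have deven: "\<And>T. even T \<Longrightarrow> 2 \<le> T \<Longrightarrow> (f ^^ T) d = z0"
  proof -
    fix T :: nat assume "even T" "2 \<le> T"
    then have "\<exists>j. T = 2 * j + 2" by presburger
    then obtain j where "T = 2 * j + 2" by blast
    then show "(f ^^ T) d = z0" using dpe by simp
  qed
  have dnp: "\<And>T. 0 < T \<Longrightarrow> (f ^^ T) d \<noteq> d"
  proof -
    fix T :: nat assume T: "0 < T"
    show "(f ^^ T) d \<noteq> d"
    proof (cases "T = 1")
      case True
      then show ?thesis using dP dz0 by auto
    next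
      case False
      then have T2: "2 \<le> T" using T by simp
      have "(f ^^ T) d = z0 \<or> (f ^^ T) d = w"
      proof (cases "even T")
        case True then show ?thesis using deven T2 by blast
      next
        case False
        then have "3 \<le> T" using T2 by presburger
        then show ?thesis using dodd False by blast
      qed
      then show ?thesis using dz0 wz0 by auto
    qed
  qed
  have ffal: "\<And>y. y \<in> {al..z0} \<Longrightarrow> \<exists>s\<in>{d..v}. f (f s) = y"
  proof -
    fix y assume y: "y \<in> {al..z0}"
    show "\<exists>s\<in>{d..v}. f (f s) = y"
      by (rule ivt_between[OF FFC]) (use y dP dab vab ffv in auto)
  qed
  have cover: "\<And>j. 1 \<le> j \<Longrightarrow> \<forall>y\<in>{al..z0}. \<exists>s\<in>{d..v}. (f ^^ (2*j)) s = y"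
  proof -
    fix j :: nat assume "1 \<le> j"
    then show "\<forall>y\<in>{al..z0}. \<exists>s\<in>{d..v}. (f ^^ (2*j)) s = y"
    proof (induction j rule: dec_induct)
      case base
      then show ?case using ffal F2 by simp
    next
      case (step j)
      show ?case
      proof
        fix y assume y: "y \<in> {al..z0}"
        obtain s1 where s1: "s1 \<in> {d..v}" "f (f s1) = y" using ffal[OF y] by blast
        have "s1 \<in> {al..z0}" using s1 dP vz0 by auto
        then obtain s where s: "s \<in> {d..v}" "(f ^^ (2*j)) s = s1" using step by blast
        have "(f ^^ (2 * Suc j)) s = (f ^^ 2) ((f ^^ (2*j)) s)"
          by (metis funpow_addx mult_Suc_right)
        then have "(f ^^ (2 * Suc j)) s = y" using s s1 F2 by simp
        then show "\<exists>s\<in>{d..v}. (f ^^ (2 * Suc j)) s = y" using s by blast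
      qed
    qed
  qed
  have hitd: "\<And>j. 1 \<le> j \<Longrightarrow> \<exists>s\<in>{d..v}. (f ^^ (2*j)) s = d"
    using cover dP dz0 by auto
  have vw: "v < w" using vz0 wz0 by simp
  have mup: "\<And>N. 1 \<le> N \<Longrightarrow> mu' N \<in> {al..d} \<and> (f ^^ (m+2*N)) (mu' N) = d \<and>
      (\<forall>u. u \<in> {al..d} \<and> (f ^^ (m+2*N)) u = d \<longrightarrow> u \<le> mu' N)"
  proof -
    fix N :: nat assume N: "1 \<le> N"
    obtain s where s: "s \<in> {d..v}" "(f ^^ (2*N)) s = d" using hitd[OF N] by blast
    have fmal: "(f ^^ m) al = al" by (rule alper)
    have fmd: "(f ^^ m) d = w" using dodd m_odd m_ge by blast
    obtain u where u: "u \<in> {al..d}" "(f ^^ m) u = s"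
      using ivt_between[OF FCs[of al d m], of s] fmal fmd s dP alab dab vw by auto
    have "(f ^^ (m + 2*N)) u = (f ^^ (2*N)) ((f ^^ m) u)"
      by (metis add.commute funpow_addx)
    then have uu: "u \<in> {al..d} \<and> (f ^^ (m + 2*N)) u = d" using u s by simp
    have cl: "closed {x. x \<in> {al..d} \<and> (f ^^ (m + 2*N)) x = d}"
      using closed_pre[OF FCs[of al d "m+2*N"], of d] alab dab by simp
    have bd: "bdd_above {x. x \<in> {al..d} \<and> (f ^^ (m + 2*N)) x = d}" by (rule bdd_aboveI[of _ d]) auto
    have md: "mu' N = (GREATEST x. x \<in> {al..d} \<and> (f ^^ (m + 2*N)) x = d)"
      using mu'_def al_def by simp
    show "mu' N \<in> {al..d} \<and> (f ^^ (m+2*N)) (mu' N) = d \<and>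
      (\<forall>u. u \<in> {al..d} \<and> (f ^^ (m+2*N)) u = d \<longrightarrow> u \<le> mu' N)"
      unfolding md using greatest_closed[OF cl uu bd] by blast
  qed
  have mumono: "\<And>n. 1 \<le> n \<Longrightarrow> mu' n < mu' (n+1)"
  proof -
    fix n :: nat assume n: "1 \<le> n"
    have A: "mu' n \<in> {al..d}" "(f ^^ (m+2*n)) (mu' n) = d" using mup[OF n] by blast+
    have B: "\<forall>u. u \<in> {al..d} \<and> (f ^^ (m+2*(n+1))) u = d \<longrightarrow> u \<le> mu' (n+1)"
      using mup[of "n+1"] by auto
    obtain s where s: "s \<in> {d..v}" "(f ^^ (2*1)) s = d" using hitd[of 1] by auto
    have sd: "s \<noteq> d" using s dP dz0 F2 by auto
    have fd: "(f ^^ (m+2*n)) d = w" using dodd m_odd m_ge by simp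
    obtain u where u: "u \<in> {mu' n..d}" "(f ^^ (m+2*n)) u = s"
      using ivt_between[OF FCs[of "mu' n" d "m+2*n"], of s] A fd s alab dab vw by auto
    have "(f ^^ (m + 2*(n+1))) u = (f ^^ 2) ((f ^^ (m+2*n)) u)"
      by (metis funpow_addx add.commute add_Suc_right mult_Suc_right Suc_eq_plus1 add_2_eq_Suc)
    then have "(f ^^ (m + 2*(n+1))) u = d" using u s by simp
    then have "u \<le> mu' (n+1)" using B u A by auto
    moreover have "u \<noteq> mu' n" using u A sd by auto
    ultimately show "mu' n < mu' (n+1)" using u by auto
  qed
  have muP: "\<And>n k. 1 \<le> n \<Longrightarrow> 1 \<le> k \<Longrightarrow> mu n k \<in> {mu' n..mu' (n+1)} \<and>
      (f ^^ (m+2*n+2*k)) (mu n k) = d \<and>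
      (\<forall>u. u \<in> {mu' n..mu' (n+1)} \<and> (f ^^ (m+2*n+2*k)) u = d \<longrightarrow> mu n k \<le> u)"
  proof -
    fix n k :: nat assume n: "1 \<le> n" and k: "1 \<le> k"
    have A: "mu' n \<in> {al..d}" "(f ^^ (m+2*n)) (mu' n) = d" using mup[OF n] by blast+
    have A1: "mu' (n+1) \<in> {al..d}" "(f ^^ (m+2*(n+1))) (mu' (n+1)) = d" using mup[of "n+1"] by auto
    have lt: "mu' n < mu' (n+1)" using mumono[OF n] .
    have ex: "\<exists>u. u \<in> {mu' n..mu' (n+1)} \<and> (f ^^ (m+2*n+2*k)) u = d"
    proof (cases "k = 1")
      case True
      then show ?thesis using A1 lt by (intro exI[of _ "mu' (n+1)"]) (auto simp: algebra_simps)
    next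
      case False
      then have k1: "1 \<le> k - 1" using k by simp
      obtain s where s: "s \<in> {d..v}" "(f ^^ (2*(k-1))) s = d" using hitd[OF k1] by blast
      define t where "t = (f ^^ (m+2*n)) (mu' (n+1))"
      have tab: "t \<in> {a..b}" unfolding t_def using FM A1 alab dab by auto
      have "(f ^^ (m + 2*(n+1))) (mu' (n+1)) = (f ^^ 2) t" unfolding t_def
        by (metis funpow_addx add.commute add_Suc_right mult_Suc_right Suc_eq_plus1 add_2_eq_Suc)
      then have ft: "f (f t) = d" using A1 F2 by simp
      obtain r where r: "r \<in> {min d t..max d t}" "f (f r) = s"
        using ivt_seg[of d t "\<lambda>x. f (f x)" s] FFC[of "min d t" "max d t"] dab tab ft dP s vz0
        by auto
      have rr: "min ((f ^^ (m+2*n)) (mu' n)) ((f ^^ (m+2*n)) (mu' (n+1))) \<le> r \<and>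
          r \<le> max ((f ^^ (m+2*n)) (mu' n)) ((f ^^ (m+2*n)) (mu' (n+1)))"
        using r A t_def by auto
      obtain u where u: "u \<in> {mu' n..mu' (n+1)}" "(f ^^ (m+2*n)) u = r"
        using ivt_between[OF FCs[of "mu' n" "mu' (n+1)" "m+2*n"], of r] rr lt A A1 alab dab
        by auto
      have eqk: "m + 2*n + 2*k = 2*(k-1) + (2 + (m + 2*n))" using k by simp
      have "(f ^^ (m+2*n+2*k)) u = (f ^^ (2*(k-1))) ((f ^^ 2) ((f ^^ (m+2*n)) u))"
        unfolding eqk funpow_addx by simp
      then have "(f ^^ (m+2*n+2*k)) u = d" using u r s F2 by simp
      then show ?thesis using u by blast
    qed
    then obtain u0 where u0: "u0 \<in> {mu' n..mu' (n+1)} \<and> (f ^^ (m+2*n+2*k)) u0 = d" by blast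
    have cl: "closed {x. x \<in> {mu' n..mu' (n+1)} \<and> (f ^^ (m+2*n+2*k)) x = d}"
      using closed_pre[OF FCs[of "mu' n" "mu' (n+1)" "m+2*n+2*k"], of d] A A1 alab dab by simp
    have bd: "bdd_below {x. x \<in> {mu' n..mu' (n+1)} \<and> (f ^^ (m+2*n+2*k)) x = d}"
      by (rule bdd_belowI[of _ "mu' n"]) auto
    show "mu n k \<in> {mu' n..mu' (n+1)} \<and>
      (f ^^ (m+2*n+2*k)) (mu n k) = d \<and>
      (\<forall>u. u \<in> {mu' n..mu' (n+1)} \<and> (f ^^ (m+2*n+2*k)) u = d \<longrightarrow> mu n k \<le> u)"
      unfolding mu_def using least_closed[OF cl u0 bd] by blast
  qed
  show ?thesis
  proof (intro allI impI)
    fix n k :: nat and x :: real and q :: nat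
    assume H: "n \<ge> 1 \<and> k \<ge> 1 \<and> x \<in> {mu' n..mu n k} \<and> least_period_point f q x \<and> odd q"
    then have n: "1 \<le> n" and k: "1 \<le> k" and xI: "x \<in> {mu' n..mu n k}" and qo: "odd q"
      and q0: "0 < q" and xq: "(f ^^ q) x = x"
      unfolding least_period_point_def by auto
    have A: "mu' n \<in> {al..d}" "(f ^^ (m+2*n)) (mu' n) = d"
      and Amax: "\<forall>u. u \<in> {al..d} \<and> (f ^^ (m+2*n)) u = d \<longrightarrow> u \<le> mu' n"
      using mup[OF n] by blast+
    have A1: "mu' (n+1) \<in> {al..d}" using mup[of "n+1"] by auto
    have M: "mu n k \<in> {mu' n..mu' (n+1)}"
      and Mmin: "\<forall>u. u \<in> {mu' n..mu' (n+1)} \<and> (f ^^ (m+2*n+2*k)) u = d \<longrightarrow> mu n k \<le> u"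
      using muP[OF n k] by blast+
    have xr: "mu' n \<le> x" "x \<le> mu n k" "x \<le> mu' (n+1)" "x \<le> d" "al \<le> x"
      using xI M A A1 by auto
    have orb: "\<And>i. (f ^^ i) x \<noteq> d"
    proof
      fix i assume "(f ^^ i) x = d"
      then have "(f ^^ q) d = (f ^^ i) ((f ^^ q) x)" by (metis funpow_comm)
      then have "(f ^^ q) d = d" using xq \<open>(f ^^ i) x = d\<close> by simp
      then show False using dnp q0 by blast
    qed
    have xd: "x < d" using xr orb[of 0] by (auto simp: order.order_iff_strict)
    show "q \<ge> m + 2*n + 2*k + 2"
    proof (rule ccontr)
      assume "\<not> q \<ge> m + 2*n + 2*k + 2"
      then have qle: "q \<le> m + 2*n + 2*k" using qo m_odd by presburger
      show False
      proof (cases "q \<le> m + 2*n")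
        case True
        define T where "T = (if q = 1 then 3 else q)"
        have xT: "(f ^^ T) x = x"
        proof (cases "q = 1")
          case True
          then show ?thesis unfolding T_def using funpow_mult_fix[OF xq, of 3] by simp
        next
          case False then show ?thesis unfolding T_def using xq by simp
        qed
        have To: "odd T" "3 \<le> T" "T \<le> m + 2*n" unfolding T_def
          using qo q0 True m_ge n by (auto, presburger)
        then have "\<exists>j. m + 2*n = 2*j + T" using m_odd by presburger
        then obtain j where j: "m + 2*n = 2*j + T" by blast
        have fTd: "(f ^^ T) d = w" using dodd To by blast
        obtain tg where tg: "tg \<in> {d..v}" "(f ^^ (2*j)) tg = d"
        proof (cases "j = 0")
          case True then show ?thesis using that[of d] dP by auto
        next
          case False then show ?thesis using that hitd[of j] by auto
        qed
        obtain u where u: "u \<in> {x..d}" "(f ^^ T) u = tg"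
          using ivt_between[OF FCs[of x d T], of tg] xT fTd tg xr xd alab dab vw by auto
        have "(f ^^ (m+2*n)) u = (f ^^ (2*j)) ((f ^^ T) u)" unfolding j by (rule funpow_addx)
        then have "(f ^^ (m+2*n)) u = d" using u tg by simp
        then have "u \<le> mu' n" using Amax u xr by auto
        then have "u = x" using u xr by auto
        then show False using orb \<open>(f ^^ (m+2*n)) u = d\<close> by blast
      next
        case False
        then have "\<exists>j'. q = m + 2*n + 2*j' \<and> 1 \<le> j' \<and> j' \<le> k" using qle qo m_odd by presburger
        then obtain j' where j': "q = m + 2*n + 2*j'" "1 \<le> j'" "j' \<le> k" by blast
        have "(f ^^ q) (mu' n) = (f ^^ (2*j')) ((f ^^ (m+2*n)) (mu' n))"
          unfolding j'(1) by (metis add.commute funpow_addx)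
        then have fqm: "(f ^^ q) (mu' n) = z0" using A deven[of "2*j'"] j' by simp
        obtain tg where tg: "tg \<in> {d..v}" "(f ^^ (2*(k-j'))) tg = d"
        proof (cases "k = j'")
          case True then show ?thesis using that[of d] dP by auto
        next
          case False
          then have "1 \<le> k - j'" using j' by simp
          then obtain s where "s \<in> {d..v}" "(f ^^ (2*(k-j'))) s = d" using hitd by blast
          then show ?thesis using that by auto
        qed
        obtain u where u: "u \<in> {mu' n..x}" "(f ^^ q) u = tg"
          using ivt_between[OF FCs[of "mu' n" x q], of tg] xq fqm tg xr xd A alab dab vz0 by auto
        have eqk: "m + 2*n + 2*k = 2*(k-j') + q" using j' by simp
        have "(f ^^ (m+2*n+2*k)) u = (f ^^ (2*(k-j'))) ((f ^^ q) u)"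
          unfolding eqk by (rule funpow_addx)
        then have "(f ^^ (m+2*n+2*k)) u = d" using u tg by simp
        then have "mu n k \<le> u" using Mmin u xr by auto
        then have "u = x" using u xr by auto
        then show False using orb \<open>(f ^^ (m+2*n+2*k)) u = d\<close> by blast
      qed
    qed
  qed
qed

end
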